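(* Assume (A1)–(A4) and $\eta_x,\eta_z>0$ (see context). Then the iterates of the Jacobi scheme satisfy, for all $k\ge1$, $$\Delta\Phi^k\le-\eta_x\sum_{t=1}^T\Big(\|\Delta x_t^k\|^2_{A_t^\top A_t}+\|\Delta x_t^{k-1}\|^2_{A_t^\top A_t}\Big)-\eta_z\Big(\|\Delta z^k\|^2+\|\Delta z^{k-1}\|^2\Big).$$
   Context: Let $T\ge1$, $[T]=\{1,\dots,T\}$; for $t\in[T]$: $X_t\subseteq\mathbb{R}^{n_t}$, $f_t:\mathbb{R}^{n_t}\to\mathbb{R}$, $A_t\in\mathbb{R}^{m\times n_t}$; $b\in\mathbb{R}^m$; $X=\prod_tX_t$, $A=[A_1\cdots A_T]$, $Ax=\sum_tA_tx_t$, $A_{\neq t}x_{\neq t}=\sum_{s\neq t}A_sx_s$; $\|w\|_M=\sqrt{w^\top Mw}$. Assumptions: (A1) $X_t$ nonempty compact; (A2) $f_t$ is $C^2$; (A3) $A$ full row rank; (A4) $\{x\in X:Ax=b\}\neq\emptyset$. Parameters $\rho,\theta,\tau_x,\tau_z>0$ with $\eta_x:=\frac{\tau_x}{4}-\frac{(T-1)\rho}{2}>0$, $\eta_z:=\frac{\tau_z}{4}-\frac{2(\theta+\tau_z)^2}{\rho}>0$. $\mathcal{L}(x,z,\lambda)=\sum_tf_t(x_t)+\frac{\theta}{2}\|z\|^2+\lambda^\top(Ax+z-b)+\frac{\rho}{2}\|Ax+z-b\|^2$. Jacobi scheme: given $x^0\in X$, $z^0,\lambda^0\in\mathbb{R}^m$,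 for $k\ge1$: (i) for each $t$, $x_t^k$ is a local minimizer, computed by a solver warm-started at $x_t^{k-1}$ (so that its subproblem objective does not exceed that of $x_t^{k-1}$), of $\min_{x_t\in X_t}f_t(x_t)+(\lambda^{k-1})^\top A_tx_t+\frac{\rho}{2}\|A_tx_t+A_{\neq t}x^{k-1}_{\neq t}+z^{k-1}-b\|^2+\frac{\tau_x}{2}\|x_t-x_t^{k-1}\|^2_{A_t^\top A_t}$; (ii) $z^k=(\tau_zz^{k-1}-\rho(Ax^k-b)-\lambda^{k-1})/(\tau_z+\rho+\theta)$; (iii) $\lambda^k=\lambda^{k-1}+\rho(Ax^k+z^k-b)$. $\Phi(x,z,\lambda,\hat x,\hat z)=\mathcal{L}(x,z,\lambda)+\frac{\tau_z}{4}\|z-\hat z\|^2+\sum_t\frac{\tau_x}{4}\|x_t-\hat x_t\|^2_{A_t^\top A_t}$; $\Phi^k=\Phi(x^k,z^k,\lambda^k,x^{k-1},z^{k-1})$ for $k\ge1$. For $k\ge1$: $\Delta x^k=x^k-x^{k-1}$, $\Delta z^k=z^k-z^{k-1}$, $\Delta\Phi^k=\Phi^k-\Phi^{k-1}$. Also $\Delta z^0=-\tau_z^{-1}(\lambda^0+\theta z^0)$, $\Delta x^0=0$, $\Phi^0=\mathcal{L}(x^0,z^0,\lambda^0)+\frac{\tau_z}{4}\|\Delta z^0\|^2$. *)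

theory Defs
  imports "HOL-Analysis.Analysis"
begin

text \<open>A vector of R^n is modelled as a function v :: nat => real whose
coordinates j >= n vanish (the set Rn n). Blocks are indexed by t in {1..T}.
An m x n_t matrix A_t is a function nat => nat => real (entries A_t i j, i < m, j < n_t).\<close>

definition Rn :: "nat \<Rightarrow> (nat \<Rightarrow> real) set" where
  "Rn n = {v. \<forall>j\<ge>n. v j = 0}"

definition sqn :: "nat \<Rightarrow> (nat \<Rightarrow> real) \<Rightarrow> real" where
  "sqn m w = (\<Sum>i<m. (w i)^2)"

definition ip :: "nat \<Rightarrow> (nat \<Rightarrow> real) \<Rightarrow> (nat \<Rightarrow> real) \<Rightarrow> real" where
  "ip m u v = (\<Sum>i<m. u i * v i)"

definition vdist :: "nat \<Rightarrow> (nat \<Rightarrow> real) \<Rightarrow> (nat \<Rightarrow> real) \<Rightarrow> real" where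
  "vdist n u v = sqrt (\<Sum>j<n. (u j - v j)^2)"

definition matvec :: "nat \<Rightarrow> nat \<Rightarrow> (nat \<Rightarrow> nat \<Rightarrow> real) \<Rightarrow> (nat \<Rightarrow> real) \<Rightarrow> (nat \<Rightarrow> real)" where
  "matvec m n M v = (\<lambda>i. if i < m then (\<Sum>j<n. M i j * v j) else 0)"

text \<open>The squared seminorm ||w||^2_{A_t^T A_t} = w^T A_t^T A_t w = ||A_t w||^2.\<close>
definition sqnAtA :: "nat \<Rightarrow> nat \<Rightarrow> (nat \<Rightarrow> nat \<Rightarrow> real) \<Rightarrow> (nat \<Rightarrow> real) \<Rightarrow> real" where
  "sqnAtA m n M w = sqn m (matvec m n M w)"

definition Aop :: "nat \<Rightarrow> (nat \<Rightarrow> nat) \<Rightarrow> (nat \<Rightarrow> nat \<Rightarrow> nat \<Rightarrow> real) \<Rightarrow> nat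
    \<Rightarrow> (nat \<Rightarrow> nat \<Rightarrow> real) \<Rightarrow> (nat \<Rightarrow> real)" where
  "Aop m n A T x = (\<lambda>i. \<Sum>t\<in>{1..T}. matvec m (n t) (A t) (x t) i)"

definition Aop_ne :: "nat \<Rightarrow> (nat \<Rightarrow> nat) \<Rightarrow> (nat \<Rightarrow> nat \<Rightarrow> nat \<Rightarrow> real) \<Rightarrow> nat
    \<Rightarrow> nat \<Rightarrow> (nat \<Rightarrow> nat \<Rightarrow> real) \<Rightarrow> (nat \<Rightarrow> real)" where
  "Aop_ne m n A T t x = (\<lambda>i. \<Sum>s\<in>{1..T} - {t}. matvec m (n s) (A s) (x s) i)"

definition full_row_rank :: "nat \<Rightarrow> (nat \<Rightarrow> nat) \<Rightarrow> (nat \<Rightarrow> nat \<Rightarrow> nat \<Rightarrow> real) \<Rightarrow> nat \<Rightarrow> bool" where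
  "full_row_rank m n A T \<longleftrightarrow>
     (\<forall>c :: nat \<Rightarrow> real. (\<forall>t\<in>{1..T}. \<forall>j<n t. (\<Sum>i<m. c i * A t i j) = 0) \<longrightarrow> (\<forall>i<m. c i = 0))"

definition pderiv_at :: "nat \<Rightarrow> ((nat \<Rightarrow> real) \<Rightarrow> real) \<Rightarrow> (nat \<Rightarrow> real) \<Rightarrow> real" where
  "pderiv_at j g x = deriv (\<lambda>s. g (x(j := x j + s))) 0"

definition C2_on_Rn :: "nat \<Rightarrow> ((nat \<Rightarrow> real) \<Rightarrow> real) \<Rightarrow> bool" where
  "C2_on_Rn n g \<longleftrightarrow>
     continuous_on (Rn n) g \<and>
     (\<forall>j<n. \<forall>x\<in>Rn n. (\<lambda>s. g (x(j := x j + s))) differentiable (at 0)) \<and>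
     (\<forall>j<n. continuous_on (Rn n) (pderiv_at j g)) \<and>
     (\<forall>i<n. \<forall>j<n. \<forall>x\<in>Rn n. (\<lambda>s. pderiv_at j g (x(i := x i + s))) differentiable (at 0)) \<and>
     (\<forall>i<n. \<forall>j<n. continuous_on (Rn n) (pderiv_at i (pderiv_at j g)))"

definition local_min_on :: "nat \<Rightarrow> ((nat \<Rightarrow> real) \<Rightarrow> real) \<Rightarrow> (nat \<Rightarrow> real) set \<Rightarrow> (nat \<Rightarrow> real) \<Rightarrow> bool" where
  "local_min_on n S X y \<longleftrightarrow> y \<in> X \<and> (\<exists>e>0. \<forall>u\<in>X. vdist n u y < e \<longrightarrow> S y \<le> S u)"

definition AL :: "nat \<Rightarrow> (nat \<Rightarrow> nat) \<Rightarrow> nat \<Rightarrow> (nat \<Rightarrow> (nat \<Rightarrow> real) \<Rightarrow> real)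
    \<Rightarrow> (nat \<Rightarrow> nat \<Rightarrow> nat \<Rightarrow> real) \<Rightarrow> (nat \<Rightarrow> real) \<Rightarrow> real \<Rightarrow> real
    \<Rightarrow> (nat \<Rightarrow> nat \<Rightarrow> real) \<Rightarrow> (nat \<Rightarrow> real) \<Rightarrow> (nat \<Rightarrow> real) \<Rightarrow> real" where
  "AL m n T f A b \<theta> \<rho> x z lam =
     (let r = (\<lambda>i. Aop m n A T x i + z i - b i) in
      (\<Sum>t\<in>{1..T}. f t (x t)) + \<theta>/2 * sqn m z + ip m lam r + \<rho>/2 * sqn m r)"

definition Phi :: "nat \<Rightarrow> (nat \<Rightarrow> nat) \<Rightarrow> nat \<Rightarrow> (nat \<Rightarrow> (nat \<Rightarrow> real) \<Rightarrow> real)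
    \<Rightarrow> (nat \<Rightarrow> nat \<Rightarrow> nat \<Rightarrow> real) \<Rightarrow> (nat \<Rightarrow> real) \<Rightarrow> real \<Rightarrow> real \<Rightarrow> real \<Rightarrow> real
    \<Rightarrow> (nat \<Rightarrow> nat \<Rightarrow> real) \<Rightarrow> (nat \<Rightarrow> real) \<Rightarrow> (nat \<Rightarrow> real)
    \<Rightarrow> (nat \<Rightarrow> nat \<Rightarrow> real) \<Rightarrow> (nat \<Rightarrow> real) \<Rightarrow> real" where
  "Phi m n T f A b \<theta> \<rho> \<tau>x \<tau>z x z lam xh zh =
     AL m n T f A b \<theta> \<rho> x z lam + \<tau>z/4 * sqn m (\<lambda>i. z i - zh i)
     + (\<Sum>t\<in>{1..T}. \<tau>x/4 * sqnAtA m (n t) (A t) (\<lambda>j. x t j - xh t j))"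

text \<open>Objective of the t-th x-subproblem at iteration k (given the previous iterates
xp = x^{k-1}, zp = z^{k-1}, lp = lambda^{k-1}).\<close>
definition subobj :: "nat \<Rightarrow> (nat \<Rightarrow> nat) \<Rightarrow> nat \<Rightarrow> (nat \<Rightarrow> (nat \<Rightarrow> real) \<Rightarrow> real)
    \<Rightarrow> (nat \<Rightarrow> nat \<Rightarrow> nat \<Rightarrow> real) \<Rightarrow> (nat \<Rightarrow> real) \<Rightarrow> real \<Rightarrow> real
    \<Rightarrow> nat \<Rightarrow> (nat \<Rightarrow> nat \<Rightarrow> real) \<Rightarrow> (nat \<Rightarrow> real) \<Rightarrow> (nat \<Rightarrow> real)
    \<Rightarrow> (nat \<Rightarrow> real) \<Rightarrow> real" where
  "subobj m n T f A b \<rho> \<tau>x t xp zp lp y =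
     f t y + ip m lp (matvec m (n t) (A t) y)
     + \<rho>/2 * sqn m (\<lambda>i. matvec m (n t) (A t) y i + Aop_ne m n A T t xp i + zp i - b i)
     + \<tau>x/2 * sqnAtA m (n t) (A t) (\<lambda>j. y j - xp t j)"

definition Dx :: "(nat \<Rightarrow> nat \<Rightarrow> nat \<Rightarrow> real) \<Rightarrow> nat \<Rightarrow> nat \<Rightarrow> (nat \<Rightarrow> real)" where
  "Dx x k t = (if k = 0 then (\<lambda>j. 0) else (\<lambda>j. x k t j - x (k - 1) t j))"

definition Dz :: "real \<Rightarrow> real \<Rightarrow> (nat \<Rightarrow> nat \<Rightarrow> real) \<Rightarrow> (nat \<Rightarrow> nat \<Rightarrow> real) \<Rightarrow> nat \<Rightarrow> (nat \<Rightarrow> real)" where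
  "Dz \<theta> \<tau>z z lam k = (if k = 0 then (\<lambda>i. - (lam 0 i + \<theta> * z 0 i) / \<tau>z)
                      else (\<lambda>i. z k i - z (k - 1) i))"

definition PhiSeq :: "nat \<Rightarrow> (nat \<Rightarrow> nat) \<Rightarrow> nat \<Rightarrow> (nat \<Rightarrow> (nat \<Rightarrow> real) \<Rightarrow> real)
    \<Rightarrow> (nat \<Rightarrow> nat \<Rightarrow> nat \<Rightarrow> real) \<Rightarrow> (nat \<Rightarrow> real) \<Rightarrow> real \<Rightarrow> real \<Rightarrow> real \<Rightarrow> real
    \<Rightarrow> (nat \<Rightarrow> nat \<Rightarrow> nat \<Rightarrow> real) \<Rightarrow> (nat \<Rightarrow> nat \<Rightarrow> real) \<Rightarrow> (nat \<Rightarrow> nat \<Rightarrow> real) \<Rightarrow> nat \<Rightarrow> real" where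
  "PhiSeq m n T f A b \<theta> \<rho> \<tau>x \<tau>z x z lam k =
     (if k = 0 then AL m n T f A b \<theta> \<rho> (x 0) (z 0) (lam 0) + \<tau>z/4 * sqn m (Dz \<theta> \<tau>z z lam 0)
      else Phi m n T f A b \<theta> \<rho> \<tau>x \<tau>z (x k) (z k) (lam k) (x (k - 1)) (z (k - 1)))"

end

theory Submission
  imports Defs
begin

lemma matvec_diff: "matvec m n M (\<lambda>j. a j - c j) i = matvec m n M a i - matvec m n M c i"
  by (simp add: matvec_def sum_subtractf right_diff_distrib)

lemma matvec_zero: "matvec m n M (\<lambda>j. 0) = (\<lambda>i. 0)" by (rule ext) (simp add: matvec_def)

lemma Aop_split: "t \<in> {1..T} \<Longrightarrow> Aop m n A T x i = matvec m (n t) (A t) (x t) i + Aop_ne m n A T t x i"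
  unfolding Aop_def Aop_ne_def by (simp add: sum.remove)

lemma Aop_diff: "Aop m n A T xn i = Aop m n A T xo i + (\<Sum>t\<in>{1..T}. matvec m (n t) (A t) (\<lambda>j. xn t j - xo t j) i)"
  unfolding Aop_def by (simp add: matvec_diff sum_subtractf)

lemma subobj_eq:
  assumes "t \<in> {1..T}"
  shows "subobj m n T f A b \<rho> \<tau>x t xo zo lo (xn t) - subobj m n T f A b \<rho> \<tau>x t xo zo lo (xo t)
   = f t (xn t) - f t (xo t) + (\<Sum>i<m. lo i * matvec m (n t) (A t) (\<lambda>j. xn t j - xo t j) i
       + \<rho> * (Aop m n A T xo i + zo i - b i) * matvec m (n t) (A t) (\<lambda>j. xn t j - xo t j) i
       + \<rho>/2 * (matvec m (n t) (A t) (\<lambda>j. xn t j - xo t j) i)^2)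
     + \<tau>x/2 * (\<Sum>i<m. (matvec m (n t) (A t) (\<lambda>j. xn t j - xo t j) i)^2)"
proof -
  define u where "u i = matvec m (n t) (A t) (\<lambda>j. xn t j - xo t j) i" for i
  define w where "w i = Aop m n A T xo i + zo i - b i" for i
  define v where "v i = matvec m (n t) (A t) (xo t) i" for i
  have e1: "matvec m (n t) (A t) (xn t) i = v i + u i" for i
    by (simp add: u_def v_def matvec_diff)
  have e2: "Aop_ne m n A T t xo i = w i - zo i + b i - v i" for i
    using Aop_split[OF assms, of m n A xo i] by (simp add: w_def v_def)
  have e3: "sqnAtA m (n t) (A t) (\<lambda>j. 0) = 0"
    by (simp add: sqnAtA_def sqn_def matvec_def)
  have s1: "subobj m n T f A b \<rho> \<tau>x t xo zo lo (xn t) = f t (xn t) + (\<Sum>i<m. lo i * (v i + u i))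
      + \<rho>/2 * (\<Sum>i<m. (w i + u i)^2) + \<tau>x/2 * (\<Sum>i<m. (u i)^2)"
    unfolding subobj_def ip_def sqn_def sqnAtA_def by (simp add: e1 e2 u_def add_ac)
  have s2: "subobj m n T f A b \<rho> \<tau>x t xo zo lo (xo t) = f t (xo t) + (\<Sum>i<m. lo i * v i)
      + \<rho>/2 * (\<Sum>i<m. (w i)^2)"
    unfolding subobj_def ip_def by (simp add: e2 e3 v_def[symmetric] sqn_def)
  have "(\<Sum>i<m. lo i * (v i + u i)) - (\<Sum>i<m. lo i * v i) + \<rho>/2 * (\<Sum>i<m. (w i + u i)^2) - \<rho>/2 * (\<Sum>i<m. (w i)^2)
     = (\<Sum>i<m. lo i * u i + \<rho> * w i * u i + \<rho>/2 * (u i)^2)"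
    by (simp add: sum_subtractf[symmetric] right_diff_distrib[symmetric] sum_distrib_left sum.distrib[symmetric] power2_eq_square algebra_simps)
  then show ?thesis unfolding s1 s2 u_def[symmetric] w_def[symmetric] by simp
qed

lemma F1:
  assumes rho: "\<rho> \<ge> 0"
    and dec: "\<forall>t\<in>{1..T}. subobj m n T f A b \<rho> \<tau>x t xo zo lo (xn t) \<le> subobj m n T f A b \<rho> \<tau>x t xo zo lo (xo t)"
  shows "AL m n T f A b \<theta> \<rho> xn zo lo - AL m n T f A b \<theta> \<rho> xo zo lo
     \<le> ((real T - 1) * \<rho> / 2 - \<tau>x / 2) * (\<Sum>t\<in>{1..T}. sqnAtA m (n t) (A t) (\<lambda>j. xn t j - xo t j))"
proof -
  define u where "u t i = matvec m (n t) (A t) (\<lambda>j. xn t j - xo t j) i" for t i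
  define w where "w i = Aop m n A T xo i + zo i - b i" for i
  define U where "U i = (\<Sum>t\<in>{1..T}. u t i)" for i
  define S where "S = (\<Sum>t\<in>{1..T}. \<Sum>i<m. (u t i)^2)"
  define D where "D = (\<Sum>t\<in>{1..T}. f t (xn t) - f t (xo t))"
  have hS: "(\<Sum>t\<in>{1..T}. sqnAtA m (n t) (A t) (\<lambda>j. xn t j - xo t j)) = S"
    unfolding S_def u_def sqnAtA_def sqn_def by simp
  have a: "(\<Sum>t\<in>{1..T}. \<Sum>i<m. lo i * u t i + \<rho> * w i * u t i) = (\<Sum>i<m. lo i * U i + \<rho> * w i * U i)"
    unfolding U_def sum_distrib_left by (subst sum.swap) (simp add: sum.distrib)
  have "(\<Sum>t\<in>{1..T}. subobj m n T f A b \<rho> \<tau>x t xo zo lo (xn t) - subobj m n T f A b \<rho> \<tau>x t xo zo lo (xo t)) \<le> 0"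
    using dec by (intro sum_nonpos) auto
  also have "(\<Sum>t\<in>{1..T}. subobj m n T f A b \<rho> \<tau>x t xo zo lo (xn t) - subobj m n T f A b \<rho> \<tau>x t xo zo lo (xo t))
     = (\<Sum>t\<in>{1..T}. (f t (xn t) - f t (xo t)) + (\<Sum>i<m. lo i * u t i + \<rho> * w i * u t i) + (\<rho> + \<tau>x)/2 * (\<Sum>i<m. (u t i)^2))"
  proof (rule sum.cong)
    fix t assume t: "t \<in> {1..T}"
    show "subobj m n T f A b \<rho> \<tau>x t xo zo lo (xn t) - subobj m n T f A b \<rho> \<tau>x t xo zo lo (xo t)
       = (f t (xn t) - f t (xo t)) + (\<Sum>i<m. lo i * u t i + \<rho> * w i * u t i) + (\<rho> + \<tau>x)/2 * (\<Sum>i<m. (u t i)^2)"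
      unfolding subobj_eq[OF t] u_def[symmetric] w_def[symmetric]
      by (simp add: sum.distrib sum_distrib_left algebra_simps add_divide_distrib)
  qed simp
  also have "\<dots> = D + (\<Sum>i<m. lo i * U i + \<rho> * w i * U i) + (\<rho> + \<tau>x)/2 * S"
    unfolding D_def S_def a[symmetric] by (simp add: sum.distrib sum_distrib_left)
  finally have sumdec: "D + (\<Sum>i<m. lo i * U i + \<rho> * w i * U i) + (\<rho> + \<tau>x)/2 * S \<le> 0" .
  have r: "Aop m n A T xn i + zo i - b i = w i + U i" for i
    using Aop_diff[of m n A T xn i xo] by (simp add: w_def U_def u_def)
  have ALd: "AL m n T f A b \<theta> \<rho> xn zo lo - AL m n T f A b \<theta> \<rho> xo zo lo
     = D + (\<Sum>i<m. lo i * U i + \<rho> * w i * U i) + \<rho>/2 * (\<Sum>i<m. (U i)^2)"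
  proof -
    have "AL m n T f A b \<theta> \<rho> xn zo lo - AL m n T f A b \<theta> \<rho> xo zo lo
      = D + ((\<Sum>i<m. lo i * (w i + U i)) - (\<Sum>i<m. lo i * w i) + \<rho>/2 * (\<Sum>i<m. (w i + U i)^2) - \<rho>/2 * (\<Sum>i<m. (w i)^2))"
      unfolding AL_def Let_def ip_def sqn_def r w_def[symmetric] D_def by (simp add: sum_subtractf)
    also have "(\<Sum>i<m. lo i * (w i + U i)) - (\<Sum>i<m. lo i * w i) + \<rho>/2 * (\<Sum>i<m. (w i + U i)^2) - \<rho>/2 * (\<Sum>i<m. (w i)^2)
      = (\<Sum>i<m. lo i * U i + \<rho> * w i * U i) + \<rho>/2 * (\<Sum>i<m. (U i)^2)"
      by (simp add: sum_subtractf[symmetric] right_diff_distrib[symmetric] sum_distrib_left sum.distrib[symmetric] power2_eq_square algebra_simps)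
    finally show ?thesis by simp
  qed
  have cs: "(\<Sum>i<m. (U i)^2) \<le> real T * S"
  proof -
    have "(\<Sum>i<m. (U i)^2) \<le> (\<Sum>i<m. real T * (\<Sum>t\<in>{1..T}. (u t i)^2))"
    proof (rule sum_mono)
      fix i
      show "(U i)^2 \<le> real T * (\<Sum>t\<in>{1..T}. (u t i)^2)"
        unfolding U_def using sum_squared_le_sum_of_squares[of "\<lambda>t. u t i" "{1..T}"]
        by (simp add: mult_of_nat_commute)
    qed
    also have "\<dots> = real T * S" unfolding S_def sum_distrib_left[symmetric] by (subst sum.swap) simp
    finally show ?thesis .
  qed
  have h1: "\<rho>/2 * (\<Sum>i<m. (U i)^2) \<le> \<rho>/2 * (real T * S)" using cs rho by (intro mult_left_mono) auto
  have eq: "((real T - 1) * \<rho> / 2 - \<tau>x / 2) * S = \<rho>/2 * (real T * S) - (\<rho> + \<tau>x)/2 * S"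
    by (simp add: field_simps)
  show ?thesis unfolding ALd hS eq using sumdec h1 by linarith
qed

lemma AL_sum: "AL m n T f A b \<theta> \<rho> x z l = (\<Sum>t\<in>{1..T}. f t (x t))
   + (\<Sum>i<m. \<theta>/2 * (z i)^2 + l i * (Aop m n A T x i + z i - b i) + \<rho>/2 * (Aop m n A T x i + z i - b i)^2)"
  by (simp add: AL_def Let_def ip_def sqn_def sum.distrib sum_distrib_left)

lemma F2pt:
  fixes l zo zn a bi \<rho> \<theta> \<tau> :: real
  assumes "l = \<tau>*zo - \<rho>*(a - bi) - (\<tau>+\<rho>+\<theta>)*zn"
  shows "\<theta>/2*zn^2 + l*(a+zn-bi) + \<rho>/2*(a+zn-bi)^2 - (\<theta>/2*zo^2 + l*(a+zo-bi) + \<rho>/2*(a+zo-bi)^2)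
     = -(\<tau> + (\<theta>+\<rho>)/2)*(zn-zo)^2"
  unfolding assms by (simp add: power2_eq_square field_simps)

lemma F3pt:
  fixes L l r d e \<rho> \<theta> \<tau> c :: real
  assumes "\<rho> > 0" "L - l = \<rho> * r" "L - l = -(\<theta>+\<tau>)*d + \<tau>*e"
  shows "(c + L*r + \<rho>/2*r^2) - (c + l*r + \<rho>/2*r^2) \<le> 2*(\<theta>+\<tau>)^2/\<rho> * d^2 + 2*\<tau>^2/\<rho> * e^2"
proof -
  have r: "r = (L - l)/\<rho>" using assms by simp
  have "(c + L*r + \<rho>/2*r^2) - (c + l*r + \<rho>/2*r^2) = (L - l)^2/\<rho>"
    unfolding r using assms(1) by (simp add: power2_eq_square field_simps)
  also have "(L - l)^2 \<le> 2*(\<theta>+\<tau>)^2 * d^2 + 2*\<tau>^2 * e^2"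
  proof -
    have "0 \<le> ((\<theta>+\<tau>)*d + \<tau>*e)^2" by simp
    then show ?thesis unfolding assms(3) by (simp add: power2_eq_square algebra_simps)
  qed
  then have "(L - l)^2/\<rho> \<le> (2*(\<theta>+\<tau>)^2 * d^2 + 2*\<tau>^2 * e^2)/\<rho>"
    using assms(1) by (intro divide_right_mono) auto
  finally show ?thesis by (simp add: add_divide_distrib)
qed

lemma final_arith:
  fixes diff SU SUo DZ DZo \<rho> \<theta> \<tau>x \<tau>z \<eta>x \<eta>z T :: real
  assumes "\<rho> > 0" "\<theta> > 0" "\<tau>z > 0" "T \<ge> 1" "SUo \<ge> 0" "DZ \<ge> 0" "DZo \<ge> 0"
    and "\<eta>x = \<tau>x / 4 - (T - 1) * \<rho> / 2" "\<eta>z = \<tau>z / 4 - 2 * (\<theta> + \<tau>z)^2 / \<rho>"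
    and "diff \<le> (2*(\<theta>+\<tau>z)^2/\<rho> * DZ + 2*\<tau>z^2/\<rho> * DZo) - (\<tau>z + (\<theta>+\<rho>)/2) * DZ
        + ((T - 1) * \<rho> / 2 - \<tau>x / 2) * SU + (\<tau>z/4 * DZ - \<tau>z/4 * DZo) + (\<tau>x/4 * SU - \<tau>x/4 * SUo)"
  shows "diff \<le> - \<eta>x * (SU + SUo) - \<eta>z * (DZ + DZo)"
proof -
  have k1: "0 \<le> ((T - 1) * \<rho> / 2) * SUo" using assms by simp
  have k2: "0 \<le> (\<tau>z/2 + (\<theta>+\<rho>)/2) * DZ" using assms by simp
  have "\<tau>z^2 \<le> (\<theta>+\<tau>z)^2" using assms by (intro power_mono) auto
  then have "2*\<tau>z^2/\<rho> \<le> 2*(\<theta>+\<tau>z)^2/\<rho>" using assms by (intro divide_right_mono) auto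
  then have k3: "0 \<le> (2*(\<theta>+\<tau>z)^2/\<rho> - 2*\<tau>z^2/\<rho>) * DZo" using assms by simp
  have eq: "(- \<eta>x * (SU + SUo) - \<eta>z * (DZ + DZo)) - ((2*(\<theta>+\<tau>z)^2/\<rho> * DZ + 2*\<tau>z^2/\<rho> * DZo) - (\<tau>z + (\<theta>+\<rho>)/2) * DZ
        + ((T - 1) * \<rho> / 2 - \<tau>x / 2) * SU + (\<tau>z/4 * DZ - \<tau>z/4 * DZo) + (\<tau>x/4 * SU - \<tau>x/4 * SUo))
     = ((T - 1) * \<rho> / 2) * SUo + (\<tau>z/2 + (\<theta>+\<rho>)/2) * DZ + (2*(\<theta>+\<tau>z)^2/\<rho> - 2*\<tau>z^2/\<rho>) * DZo"
    using assms(1) unfolding assms(8,9) by (simp add: field_simps)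
  show ?thesis using eq k1 k2 k3 assms(10) by linarith
qed

lemma lam_id:
  assumes tz: "\<tau>z > 0" and par: "\<tau>z + \<rho> + \<theta> > 0"
    and step_z: "\<forall>k\<ge>1. z k = (\<lambda>i. (\<tau>z * z (k - 1) i - \<rho> * (Aop m n A T (x k) i - b i) - lam (k - 1) i)
                                 / (\<tau>z + \<rho> + \<theta>))"
    and step_lam: "\<forall>k\<ge>1. lam k = (\<lambda>i. lam (k - 1) i + \<rho> * (Aop m n A T (x k) i + z k i - b i))"
  shows "lam k i = - \<theta> * z k i - \<tau>z * Dz \<theta> \<tau>z z lam k i"
proof (cases k)
  case 0
  then show ?thesis using tz by (simp add: Dz_def field_simps)
next
  case (Suc p)
  have hz: "z k i * (\<tau>z + \<rho> + \<theta>) = \<tau>z * z p i - \<rho> * (Aop m n A T (x k) i - b i) - lam p i"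
    using step_z Suc par by simp
  have hl: "lam k i = lam p i + \<rho> * (Aop m n A T (x k) i + z k i - b i)"
    using step_lam Suc by simp
  show ?thesis unfolding hl using hz Suc by (simp add: Dz_def algebra_simps)
qed

theorem lemma2:
  fixes T m :: nat and n :: "nat \<Rightarrow> nat"
    and X :: "nat \<Rightarrow> (nat \<Rightarrow> real) set"
    and f :: "nat \<Rightarrow> (nat \<Rightarrow> real) \<Rightarrow> real"
    and A :: "nat \<Rightarrow> nat \<Rightarrow> nat \<Rightarrow> real"
    and b :: "nat \<Rightarrow> real"
    and \<rho> \<theta> \<tau>x \<tau>z \<eta>x \<eta>z :: real
    and x :: "nat \<Rightarrow> nat \<Rightarrow> nat \<Rightarrow> real"
    and z lam :: "nat \<Rightarrow> nat \<Rightarrow> real"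
  assumes T_pos: "T \<ge> 1"
    and A1: "\<forall>t\<in>{1..T}. X t \<subseteq> Rn (n t) \<and> X t \<noteq> {} \<and> compact (X t)"
    and A2: "\<forall>t\<in>{1..T}. C2_on_Rn (n t) (f t)"
    and A3: "full_row_rank m n A T"
    and A4: "\<exists>y. (\<forall>t\<in>{1..T}. y t \<in> X t) \<and> (\<forall>i<m. Aop m n A T y i = b i)"
    and b_dim: "b \<in> Rn m"
    and params: "\<rho> > 0" "\<theta> > 0" "\<tau>x > 0" "\<tau>z > 0"
    and eta_x: "\<eta>x = \<tau>x / 4 - (real T - 1) * \<rho> / 2" and eta_x_pos: "\<eta>x > 0"
    and eta_z: "\<eta>z = \<tau>z / 4 - 2 * (\<theta> + \<tau>z)^2 / \<rho>" and eta_z_pos: "\<eta>z > 0"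
    and init: "\<forall>t\<in>{1..T}. x 0 t \<in> X t" "z 0 \<in> Rn m" "lam 0 \<in> Rn m"
    and step_x: "\<forall>k\<ge>1. \<forall>t\<in>{1..T}.
        local_min_on (n t) (subobj m n T f A b \<rho> \<tau>x t (x (k - 1)) (z (k - 1)) (lam (k - 1))) (X t) (x k t)
        \<and> subobj m n T f A b \<rho> \<tau>x t (x (k - 1)) (z (k - 1)) (lam (k - 1)) (x k t)
          \<le> subobj m n T f A b \<rho> \<tau>x t (x (k - 1)) (z (k - 1)) (lam (k - 1)) (x (k - 1) t)"
    and step_z: "\<forall>k\<ge>1. z k = (\<lambda>i. (\<tau>z * z (k - 1) i - \<rho> * (Aop m n A T (x k) i - b i) - lam (k - 1) i)
                                 / (\<tau>z + \<rho> + \<theta>))"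
    and step_lam: "\<forall>k\<ge>1. lam k = (\<lambda>i. lam (k - 1) i + \<rho> * (Aop m n A T (x k) i + z k i - b i))"
  shows "\<forall>k\<ge>1.
    PhiSeq m n T f A b \<theta> \<rho> \<tau>x \<tau>z x z lam k - PhiSeq m n T f A b \<theta> \<rho> \<tau>x \<tau>z x z lam (k - 1)
    \<le> - \<eta>x * (\<Sum>t\<in>{1..T}. sqnAtA m (n t) (A t) (Dx x k t) + sqnAtA m (n t) (A t) (Dx x (k - 1) t))
       - \<eta>z * (sqn m (Dz \<theta> \<tau>z z lam k) + sqn m (Dz \<theta> \<tau>z z lam (k - 1)))"
proof (intro allI impI)
  fix k :: nat assume k: "k \<ge> 1"
  obtain p where kp: "k = Suc p" using k by (cases k) auto
  have km1: "k - 1 = p" using kp by simp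
  define xo where "xo = x p"
  define xn where "xn = x k"
  define zo where "zo = z p"
  define zn where "zn = z k"
  define lo where "lo = lam p"
  define ln where "ln = lam k"
  define SU where "SU = (\<Sum>t\<in>{1..T}. sqnAtA m (n t) (A t) (Dx x k t))"
  define SUo where "SUo = (\<Sum>t\<in>{1..T}. sqnAtA m (n t) (A t) (Dx x p t))"
  define DZ where "DZ = sqn m (Dz \<theta> \<tau>z z lam k)"
  define DZo where "DZo = sqn m (Dz \<theta> \<tau>z z lam p)"
  have par: "\<tau>z + \<rho> + \<theta> > 0" using params by simp
  have Dxk: "Dx x k t = (\<lambda>j. xn t j - xo t j)" for t by (simp add: Dx_def kp xn_def xo_def)
  have Dzk: "Dz \<theta> \<tau>z z lam k = (\<lambda>i. zn i - zo i)" by (simp add: Dz_def kp zn_def zo_def)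
  have dec: "\<forall>t\<in>{1..T}. subobj m n T f A b \<rho> \<tau>x t xo zo lo (xn t) \<le> subobj m n T f A b \<rho> \<tau>x t xo zo lo (xo t)"
  proof
    fix t assume t: "t \<in> {1..T}"
    have "subobj m n T f A b \<rho> \<tau>x t (x (k - 1)) (z (k - 1)) (lam (k - 1)) (x k t)
        \<le> subobj m n T f A b \<rho> \<tau>x t (x (k - 1)) (z (k - 1)) (lam (k - 1)) (x (k - 1) t)"
      using step_x k t by blast
    then show "subobj m n T f A b \<rho> \<tau>x t xo zo lo (xn t) \<le> subobj m n T f A b \<rho> \<tau>x t xo zo lo (xo t)"
      unfolding xo_def xn_def zo_def lo_def km1 .
  qed
  have F1': "AL m n T f A b \<theta> \<rho> xn zo lo - AL m n T f A b \<theta> \<rho> xo zo lo \<le> ((real T - 1) * \<rho> / 2 - \<tau>x / 2) * SU"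
    using F1[OF _ dec, of \<theta>] params unfolding SU_def Dxk by simp
  have hz: "lo i = \<tau>z * zo i - \<rho> * (Aop m n A T xn i - b i) - (\<tau>z + \<rho> + \<theta>) * zn i" for i
  proof -
    have "zn i * (\<tau>z + \<rho> + \<theta>) = \<tau>z * zo i - \<rho> * (Aop m n A T xn i - b i) - lo i"
      using step_z par unfolding zn_def zo_def xn_def lo_def kp by simp
    then show ?thesis by (simp add: algebra_simps)
  qed
  have F2': "AL m n T f A b \<theta> \<rho> xn zn lo - AL m n T f A b \<theta> \<rho> xn zo lo = -(\<tau>z + (\<theta>+\<rho>)/2) * DZ"
  proof -
    have "AL m n T f A b \<theta> \<rho> xn zn lo - AL m n T f A b \<theta> \<rho> xn zo lo
       = (\<Sum>i<m. -(\<tau>z + (\<theta>+\<rho>)/2) * (zn i - zo i)^2)"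
      unfolding AL_sum add_diff_cancel_left sum_subtractf[symmetric] by (rule sum.cong[OF refl]) (rule F2pt[OF hz])
    then show ?thesis by (simp add: DZ_def Dzk sqn_def sum_distrib_left)
  qed
  have F3': "AL m n T f A b \<theta> \<rho> xn zn ln - AL m n T f A b \<theta> \<rho> xn zn lo \<le> 2*(\<theta>+\<tau>z)^2/\<rho> * DZ + 2*\<tau>z^2/\<rho> * DZo"
  proof -
    have "AL m n T f A b \<theta> \<rho> xn zn ln - AL m n T f A b \<theta> \<rho> xn zn lo
       \<le> (\<Sum>i<m. 2*(\<theta>+\<tau>z)^2/\<rho> * (Dz \<theta> \<tau>z z lam k i)^2 + 2*\<tau>z^2/\<rho> * (Dz \<theta> \<tau>z z lam p i)^2)"
      unfolding AL_sum
    proof (simp only: add_diff_cancel_left sum_subtractf[symmetric], rule sum_mono)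
      fix i
      have e1: "ln i - lo i = \<rho> * (Aop m n A T xn i + zn i - b i)"
        using step_lam unfolding ln_def lo_def xn_def zn_def kp by simp
      have e2: "ln i - lo i = -(\<theta>+\<tau>z) * Dz \<theta> \<tau>z z lam k i + \<tau>z * Dz \<theta> \<tau>z z lam p i"
        using lam_id[OF params(4) par step_z step_lam, of k i] lam_id[OF params(4) par step_z step_lam, of p i]
        unfolding ln_def lo_def by (simp add: Dzk zn_def zo_def algebra_simps)
      show "\<theta> / 2 * (zn i)\<^sup>2 + ln i * (Aop m n A T xn i + zn i - b i) + \<rho> / 2 * (Aop m n A T xn i + zn i - b i)\<^sup>2 -
          (\<theta> / 2 * (zn i)\<^sup>2 + lo i * (Aop m n A T xn i + zn i - b i) + \<rho> / 2 * (Aop m n A T xn i + zn i - b i)\<^sup>2)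
          \<le> 2*(\<theta>+\<tau>z)^2/\<rho> * (Dz \<theta> \<tau>z z lam k i)^2 + 2*\<tau>z^2/\<rho> * (Dz \<theta> \<tau>z z lam p i)^2"
        by (rule F3pt[OF params(1) e1 e2])
    qed
    then show ?thesis by (simp add: DZ_def DZo_def sqn_def sum.distrib sum_distrib_left)
  qed
  have Pk: "PhiSeq m n T f A b \<theta> \<rho> \<tau>x \<tau>z x z lam k = AL m n T f A b \<theta> \<rho> xn zn ln + \<tau>z/4 * DZ + \<tau>x/4 * SU"
    by (simp add: PhiSeq_def Phi_def kp DZ_def SU_def sum_distrib_left Dx_def Dz_def xn_def zn_def ln_def)
  have Pp: "PhiSeq m n T f A b \<theta> \<rho> \<tau>x \<tau>z x z lam p = AL m n T f A b \<theta> \<rho> xo zo lo + \<tau>z/4 * DZo + \<tau>x/4 * SUo"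
  proof (cases p)
    case 0
    have "SUo = 0" unfolding SUo_def 0 by (simp add: Dx_def sqnAtA_def sqn_def matvec_def)
    then show ?thesis by (simp add: PhiSeq_def 0 DZo_def xo_def zo_def lo_def)
  next
    case (Suc q)
    then show ?thesis
      by (simp add: PhiSeq_def Phi_def DZo_def SUo_def sum_distrib_left Dx_def Dz_def xo_def zo_def lo_def)
  qed
  have SUo0: "SUo \<ge> 0" unfolding SUo_def sqnAtA_def sqn_def by (intro sum_nonneg) auto
  have DZ0: "DZ \<ge> 0" unfolding DZ_def sqn_def by (intro sum_nonneg) auto
  have DZo0: "DZo \<ge> 0" unfolding DZo_def sqn_def by (intro sum_nonneg) auto
  have "PhiSeq m n T f A b \<theta> \<rho> \<tau>x \<tau>z x z lam k - PhiSeq m n T f A b \<theta> \<rho> \<tau>x \<tau>z x z lam p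
     \<le> - \<eta>x * (SU + SUo) - \<eta>z * (DZ + DZo)"
  proof (rule final_arith[where T = "real T"])
    show "PhiSeq m n T f A b \<theta> \<rho> \<tau>x \<tau>z x z lam k - PhiSeq m n T f A b \<theta> \<rho> \<tau>x \<tau>z x z lam p
     \<le> (2*(\<theta>+\<tau>z)^2/\<rho> * DZ + 2*\<tau>z^2/\<rho> * DZo) - (\<tau>z + (\<theta>+\<rho>)/2) * DZ
        + ((real T - 1) * \<rho> / 2 - \<tau>x / 2) * SU + (\<tau>z/4 * DZ - \<tau>z/4 * DZo) + (\<tau>x/4 * SU - \<tau>x/4 * SUo)"
      unfolding Pk Pp using F1' F2' F3' by linarith
  qed (use params T_pos SUo0 DZ0 DZo0 eta_x eta_z in auto)
  then show "PhiSeq m n T f A b \<theta> \<rho> \<tau>x \<tau>z x z lam k - PhiSeq m n T f A b \<theta> \<rho> \<tau>x \<tau>z x z lam (k - 1)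
    \<le> - \<eta>x * (\<Sum>t\<in>{1..T}. sqnAtA m (n t) (A t) (Dx x k t) + sqnAtA m (n t) (A t) (Dx x (k - 1) t))
       - \<eta>z * (sqn m (Dz \<theta> \<tau>z z lam k) + sqn m (Dz \<theta> \<tau>z z lam (k - 1)))"
    unfolding km1 SU_def SUo_def DZ_def DZo_def by (simp add: sum.distrib)
qed

end
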